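(* Let $d,a,b$ be positive integers, $r=(d+2b)/d$, $R=(a+d)/d$, with $R\ge3r$; let $\Phi$ and $x_0<r<x_1$ be as in the context. Let $x\in(1,\infty)$. (i) If $x\in[x_0,x_1]$, there is a unique $y_x\ge0$ with $x+iy_x\ne r$ and $\Phi(x+iy_x)=0$; moreover $\Phi(x+iy)>0$ for $0<y<y_x$ and $\Phi(x+iy)<0$ for $y>y_x$. (ii) If $x\notin[x_0,x_1]$, then $\Phi(x+iy)<0$ for every $y\ge0$.
   Context: For $t\in\mathbb C\setminus\{\pm1,\pm r\}$ let $\Phi(t)=d\log|t+r|-d\log|t-r|+(a+d)(\log|t-1|-\log|t+1|)$. Under $R\ge3r$, there is a unique $x_0\in(1,r)$ and a unique $x_1\in(r,\infty)$ with $\Phi(x_0)=\Phi(x_1)=0$. *)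

theory Defs
  imports Complex_Main
begin

definition Phi :: "real \<Rightarrow> real \<Rightarrow> real \<Rightarrow> complex \<Rightarrow> real" where
  "Phi d a r t = d * ln (cmod (t + of_real r)) - d * ln (cmod (t - of_real r))
     + (a + d) * (ln (cmod (t - 1)) - ln (cmod (t + 1)))"

end

theory Submission
  imports Defs
begin



locale unimod =
  fixes h D :: "real \<Rightarrow> real" and a B :: real
  assumes der: "\<And>s. a < s \<Longrightarrow> (h has_real_derivative D s) (at s)"
    and mono: "\<And>s t. a < s \<Longrightarrow> s < t \<Longrightarrow> D s \<ge> 0 \<Longrightarrow> D t > 0"
    and ev: "\<And>s. s \<ge> B \<Longrightarrow> h s < 0"
begin

lemma L1: assumes "a < s" "s \<le> t" "h t \<ge> 0" shows "D s < 0"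
proof (rule ccontr)
  assume "\<not> D s < 0"
  hence Ds: "D s \<ge> 0" by simp
  define u where "u = max B (t+1)"
  have hu: "h u < 0" using ev u_def by simp
  have tu: "t < u" using u_def by simp
  obtain z where z: "t < z" "z < u" "h u - h t = (u - t) * D z"
    using MVT2[OF tu, of h D] der assms by force
  have "D z > 0" using mono[OF assms(1) _ Ds, of z] z assms by linarith
  hence "h u - h t > 0" using z tu by simp
  thus False using hu assms by linarith
qed

lemma L2: assumes "a < s" "s < t" "h t \<ge> 0" shows "h s > h t"
proof -
  obtain z where z: "s < z" "z < t" "h t - h s = (t - s) * D z"
    using MVT2[OF assms(2), of h D] der assms by force
  have "D z < 0" using L1[of z t] z assms by linarith
  hence "(t - s) * D z < 0" using assms by (simp add: mult_pos_neg)
  thus ?thesis using z by linarith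
qed

lemma Neg2: assumes "a < s" "s < t" "h s \<le> 0" shows "h t < 0"
  using L2[OF assms(1,2)] assms(3) by force

lemma Uniq: assumes "a < t1" "a < t2" "h t1 = 0" "h t2 = 0" shows "t1 = t2"
  using L2[of t1 t2] L2[of t2 t1] assms by (cases "t1 < t2"; cases "t2 < t1") auto

lemma Pos: assumes "a < s" "s < t" "h t = 0" shows "h s > 0"
  using L2[OF assms(1,2)] assms(3) by simp

lemma Ex: assumes "a < p" "h p > 0" shows "\<exists>t>p. h t = 0"
proof -
  define u where "u = max B (p+1)"
  have hu: "h u < 0" using ev u_def by simp
  have pu: "p \<le> u" using u_def by simp
  have "continuous_on {p..u} h"
    using der assms(1) by (intro continuous_at_imp_continuous_on ballI) (meson DERIV_isCont atLeastAtMost_iff less_le_trans)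
  then obtain t where "t \<ge> p" "t \<le> u" "h t = 0"
    using IVT2'[of h u 0 p] hu assms pu by force
  thus ?thesis using assms(2) by (metis order_le_less less_irrefl)
qed

end




definition HH :: "real \<Rightarrow> real \<Rightarrow> real \<Rightarrow> real \<Rightarrow> real \<Rightarrow> real" where
  "HH d A r x s = d * ln ((x+r)^2+s) - d * ln ((x-r)^2+s) + A * (ln ((x-1)^2+s) - ln ((x+1)^2+s))"

lemma ln_cmod: "ln (cmod (Complex u v)) = ln (u^2 + v^2) / 2"
  by (simp add: complex_norm ln_sqrt)

lemma Phi_HH: "Phi d a r (Complex x y) = HH d (a+d) r x (y^2) / 2"
proof -
  have e1: "Complex x y + complex_of_real r = Complex (x+r) y" by (simp add: complex_eq_iff)
  have e2: "Complex x y - complex_of_real r = Complex (x-r) y" by (simp add: complex_eq_iff)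
  have e3: "Complex x y - 1 = Complex (x-1) y" by (simp add: complex_eq_iff)
  have e4: "Complex x y + 1 = Complex (x+1) y" by (simp add: complex_eq_iff)
  show ?thesis unfolding Phi_def HH_def e1 e2 e3 e4 ln_cmod by (simp add: field_simps)
qed

lemma dln1: assumes "c + s > 0" shows "((\<lambda>s. ln (c + s)) has_real_derivative 1/(c+s)) (at s)"
  using assms by (auto intro!: derivative_eq_intros)

lemma HH_deriv_s:
  assumes "(x-r)^2+s>0" "(x-1)^2+s > 0" "(x+r)^2+s>0" "(x+1)^2+s>0"
  shows "(HH d A r x has_real_derivative
     (d/((x+r)^2+s) - d/((x-r)^2+s) + A*(1/((x-1)^2+s) - 1/((x+1)^2+s)))) (at s)"
proof -
  have "((\<lambda>s. d*ln ((x+r)^2+s) - d*ln ((x-r)^2+s) + A*(ln ((x-1)^2+s) - ln ((x+1)^2+s)))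
     has_real_derivative (d*(1/((x+r)^2+s)) - d*(1/((x-r)^2+s)) + A*(1/((x-1)^2+s) - 1/((x+1)^2+s)))) (at s)"
    by (intro DERIV_add DERIV_diff DERIV_cmult dln1 assms)
  thus ?thesis unfolding HH_def[abs_def] by simp
qed

lemma dlnsq: fixes g :: "real \<Rightarrow> real" assumes "DERIV g x :> 1" "g x \<noteq> 0"
  shows "DERIV (\<lambda>x. ln ((g x)^2)) x :> 2/(g x)"
proof -
  have "DERIV (\<lambda>x. ln ((g x)^2)) x :> (1/((g x)^2)) * (2 * g x * 1)"
    by (rule DERIV_chain2[OF DERIV_ln_divide]) (use assms in \<open>auto intro!: derivative_eq_intros\<close>)
  thus ?thesis using assms(2) by (simp add: power2_eq_square)
qed

lemma HH_deriv_x: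
  assumes "x > 1" "x \<noteq> r" "r > 1"
  shows "((\<lambda>x. HH d A r x 0) has_real_derivative
     (d * 2 / (x + r) - d * 2 / (x - r) + A * (2 / (x - 1) - 2 / (x + 1)))) (at x)"
proof -
  have g1: "DERIV (\<lambda>x. x + r) x :> 1" "DERIV (\<lambda>x. x - r) x :> 1"
     "DERIV (\<lambda>x. x - 1) x :> 1" "DERIV (\<lambda>x. x + 1) x :> 1"
    by (auto intro!: derivative_eq_intros)
  have nz: "x - r \<noteq> 0" "x - 1 \<noteq> 0" "x + r \<noteq> 0" "x+1 \<noteq> 0" using assms by auto
  have "((\<lambda>x. d*ln ((x+r)^2) - d*ln ((x-r)^2) + A*(ln ((x-1)^2) - ln ((x+1)^2)))
     has_real_derivative (d*(2/(x+r)) - d*(2/(x-r)) + A*(2/(x-1) - 2/(x+1)))) (at x)"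
    by (intro DERIV_add DERIV_diff DERIV_cmult dlnsq[where g="\<lambda>x. x + r"]
      dlnsq[where g="\<lambda>x. x - r"] dlnsq[where g="\<lambda>x. x - 1"]
      dlnsq[where g="\<lambda>x. x + 1"] g1 nz)
  thus ?thesis unfolding HH_def[abs_def] by simp
qed

lemma HH_bound:
  assumes "(x-r)^2+s>0" "(x-1)^2+s > 0" "(x+r)^2+s>0" "(x+1)^2+s>0" "d \<ge> 0" "A \<ge> 0"
  shows "HH d A r x s \<le> 4*r*x*d/((x-r)^2+s) - 4*x*A/((x+1)^2+s)"
proof -
  define p1 where "p1 = (x+r)^2+s"
  define p2 where "p2 = (x-r)^2+s"
  define p3 where "p3 = (x-1)^2+s"
  define p4 where "p4 = (x+1)^2+s"
  have pos: "p1 > 0" "p2 > 0" "p3 > 0" "p4 > 0" using assms unfolding p1_def p2_def p3_def p4_def by auto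
  have a1: "ln p1 - ln p2 \<le> 4*r*x/p2"
  proof -
    have "ln p1 - ln p2 = ln (p1/p2)" using pos by (simp add: ln_div)
    also have "\<dots> \<le> p1/p2 - 1" using pos by (intro ln_le_minus_one) simp
    also have "\<dots> = 4*r*x/p2" using pos unfolding p1_def p2_def by (simp add: field_simps power2_eq_square)
    finally show ?thesis .
  qed
  have a2: "ln p4 - ln p3 \<ge> 4*x/p4"
  proof -
    have "ln p3 - ln p4 = ln (p3/p4)" using pos by (simp add: ln_div)
    also have "\<dots> \<le> p3/p4 - 1" using pos by (intro ln_le_minus_one) simp
    also have "\<dots> = - (4*x/p4)" using pos unfolding p3_def p4_def by (simp add: field_simps power2_eq_square)
    finally show ?thesis by linarith
  qed
  have "HH d A r x s = d * (ln p1 - ln p2) - A * (ln p4 - ln p3)"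
    unfolding HH_def p1_def p2_def p3_def p4_def by (simp add: algebra_simps)
  also have "\<dots> \<le> d * (4*r*x/p2) - A * (4*x/p4)"
    using a1 a2 assms(5,6) by (intro diff_mono mult_left_mono) auto
  also have "\<dots> = 4*r*x*d/p2 - 4*x*A/p4" using pos by (simp add: field_simps)
  finally show ?thesis unfolding p2_def p4_def by simp
qed




lemma alg4:
  fixes p2 p3 d R r x :: real
  assumes "p2 + 4*r*x \<noteq> 0" "p2 \<noteq> 0" "p3 \<noteq> 0" "p3 + 4*x \<noteq> 0"
  shows "d/(p2 + 4*r*x) - d/p2 + R*d*(1/p3 - 1/(p3+4*x)) =
    4*x*d*(R*(p2 + 4*r*x)*p2 - r*p3*(p3+4*x))/((p2 + 4*r*x)*p2*p3*(p3+4*x))"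
  using assms by (simp add: divide_simps) (simp add: algebra_simps)

lemma cplx_unimod:
  assumes d: "d>0" and r: "r>1" and R: "R > r" and A: "A = R*d" and x: "x>1"
    and a1: "a \<ge> - ((x-1)^2)" and a2: "a \<ge> - ((x-r)^2)"
  shows "unimod (HH d A r x) (\<lambda>s. d/((x+r)^2+s) - d/((x-r)^2+s) + A*(1/((x-1)^2+s) - 1/((x+1)^2+s))) a (r*(x+1)^2/(R-r) + 1)"
proof -
  define Dc where "Dc = (\<lambda>s. d/((x+r)^2+s) - d/((x-r)^2+s) + A*(1/((x-1)^2+s) - 1/((x+1)^2+s)))"
  define q where "q = (\<lambda>s. R*((x+r)^2+s)*((x-r)^2+s) - r*((x-1)^2+s)*((x+1)^2+s))"
  have pos: "(x-r)^2+s>0" "(x-1)^2+s > 0" "(x+r)^2+s>0" "(x+1)^2+s>0" if "s > a" for s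
  proof -
    show "(x-r)^2+s>0" "(x-1)^2+s > 0" using that a1 a2 by linarith+
    have "(x+r)^2 > (x-1)^2" "(x+1)^2 > (x-1)^2" using x r by (intro power_strict_mono; simp)+
    thus "(x+r)^2+s>0" "(x+1)^2+s>0" using that a1 by linarith+
  qed
  have Dform: "Dc s = 4*x*d*q s/(((x+r)^2+s)*((x-r)^2+s)*((x-1)^2+s)*((x+1)^2+s))" if "s > a" for s
  proof -
    have e1: "(x+r)^2+s = ((x-r)^2+s) + 4*r*x" and e2: "(x+1)^2+s = ((x-1)^2+s) + 4*x"
      by (simp_all add: power2_eq_square algebra_simps)
    show ?thesis unfolding Dc_def q_def A e1 e2
      using pos[OF that] unfolding e1 e2 by (intro alg4) auto
  qed
  have Dsign: "Dc s \<ge> 0 \<longleftrightarrow> q s \<ge> 0" "Dc s > 0 \<longleftrightarrow> q s > 0" if "s > a" for s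
  proof -
    define P where "P = ((x+r)^2+s)*((x-r)^2+s)*((x-1)^2+s)*((x+1)^2+s)"
    have P: "P > 0" using pos[OF that] unfolding P_def by simp
    define k where "k = 4*x*d/P"
    have k: "k > 0" using x d P unfolding k_def by simp
    have e: "Dc s = k * q s" unfolding Dform[OF that] k_def P_def by simp
    show "Dc s \<ge> 0 \<longleftrightarrow> q s \<ge> 0" "Dc s > 0 \<longleftrightarrow> q s > 0" unfolding e
      using k by (simp_all add: zero_le_mult_iff zero_less_mult_iff)
  qed
  have qdiff: "q t - q s = (t-s)*((R-r)*(t+s+2*x^2) + 2*r*(R*r - 1))" for s t
    unfolding q_def by (simp add: algebra_simps power2_eq_square)
  show ?thesis unfolding Dc_def[symmetric]
  proof
    fix s assume "a < s"
    thus "(HH d A r x has_real_derivative Dc s) (at s)"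
      unfolding Dc_def using pos by (intro HH_deriv_s) auto
  next
    fix s t assume st: "a < s" "s < t" "0 \<le> Dc s"
    have qs: "q s \<ge> 0" using Dsign st by auto
    have "t+s+2*x^2 > 0"
    proof -
      have "2*x^2 - 2*(x-1)^2 > 0" using x by (simp add: power2_eq_square algebra_simps)
      thus ?thesis using st a1 by linarith
    qed
    moreover have "R*r - 1 > 0" using R r less_1_mult[of R r] by linarith
    ultimately have "(R-r)*(t+s+2*x^2) + 2*r*(R*r - 1) > 0" using R r by (simp add: add_pos_pos)
    hence "q t - q s > 0" unfolding qdiff using st by simp
    hence "q t > 0" using qs by linarith
    thus "0 < Dc t" using Dsign st by auto
  next
    fix s assume sB: "r*(x+1)^2/(R-r) + 1 \<le> s"
    have "r*(x+1)^2/(R-r) \<ge> 0" using R r by simp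
    hence s0: "s > 0" using sB by linarith
    have "(R-r)*s \<ge> (R-r)*(r*(x+1)^2/(R-r) + 1)" using sB R by simp
    also have "(R-r)*(r*(x+1)^2/(R-r) + 1) = r*(x+1)^2 + (R-r)" using R by (simp add: field_simps)
    finally have k: "(R-r)*s > r*(x+1)^2 - R*(x-r)^2" using R r by (smt (verit) mult_nonneg_nonneg zero_le_power2)
    have p2: "(x-r)^2+s > 0" "(x+1)^2+s > 0" using s0 by (simp_all add: add_nonneg_pos)
    have key: "r*((x+1)^2+s) < R*((x-r)^2+s)" using k by (simp add: algebra_simps)
    have "HH d A r x s \<le> 4*r*x*d/((x-r)^2+s) - 4*x*A/((x+1)^2+s)"
      using s0 d A R r by (intro HH_bound) (auto intro!: add_nonneg_pos)
    also have "\<dots> = 4*x*d*(r*((x+1)^2+s) - R*((x-r)^2+s))/(((x-r)^2+s)*((x+1)^2+s))"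
      using p2 unfolding A by (simp add: field_simps)
    also have "\<dots> < 0" using p2 key x d
      by (intro divide_neg_pos mult_pos_neg) auto
    finally show "HH d A r x s < 0" .
  qed
qed




lemma real_unimod:
  assumes d: "d>0" and r: "r>1" and R: "R \<ge> 3*r" and A: "A = R*d"
  shows "unimod (\<lambda>x. HH d A r x 0) (\<lambda>x. d * 2 / (x + r) - d * 2 / (x - r) + A * (2 / (x - 1) - 2 / (x + 1))) r (3*r+2)"
proof -
  define DG where "DG = (\<lambda>x. d * 2 / (x + r) - d * 2 / (x - r) + A * (2 / (x - 1) - 2 / (x + 1)))"
  define k where "k = (\<lambda>x::real. (R-r)*x^2 - R*r^2 + r)"
  have Dform: "DG x = 4*d*k x/((x^2-r^2)*(x^2-1))" if "x > r" for x
  proof -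
    have "x + r \<noteq> 0" "x - r \<noteq> 0" "x - 1 \<noteq> 0" "x + 1 \<noteq> 0" using that r by auto
    moreover have "x^2-r^2 = (x+r)*(x-r)" "x^2-1 = (x+1)*(x-1)" by (simp_all add: power2_eq_square algebra_simps)
    ultimately show ?thesis unfolding DG_def k_def A
      by (simp add: divide_simps) (simp add: algebra_simps power2_eq_square)
  qed
  have Dsign: "DG x \<ge> 0 \<longleftrightarrow> k x \<ge> 0" "DG x > 0 \<longleftrightarrow> k x > 0" if "x > r" for x
  proof -
    have "x^2 > r^2" using that r by (intro power_strict_mono) auto
    moreover have "x^2 > 1" using that r by (intro one_less_power) auto
    ultimately have P: "(x^2-r^2)*(x^2-1) > 0" by simp
    define c where "c = 4*d/((x^2-r^2)*(x^2-1))"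
    have c: "c > 0" using P d unfolding c_def by simp
    have e: "DG x = c * k x" unfolding Dform[OF that] c_def by simp
    show "DG x \<ge> 0 \<longleftrightarrow> k x \<ge> 0" "DG x > 0 \<longleftrightarrow> k x > 0" unfolding e
      using c by (simp_all add: zero_le_mult_iff zero_less_mult_iff)
  qed
  show ?thesis unfolding DG_def[symmetric]
  proof
    fix x assume "r < x"
    thus "((\<lambda>x. HH d A r x 0) has_real_derivative DG x) (at x)"
      unfolding DG_def using r by (intro HH_deriv_x) auto
  next
    fix s t assume st: "r < s" "s < t" "0 \<le> DG s"
    have ks: "k s \<ge> 0" using Dsign st by auto
    have "s^2 < t^2" using st r by (intro power_strict_mono) auto
    hence "(R-r)*s^2 < (R-r)*t^2" using R r by simp
    hence "k t > 0" using ks unfolding k_def by linarith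
    thus "0 < DG t" using Dsign st by auto
  next
    fix x assume xB: "3*r+2 \<le> x"
    have xr: "x - r > 0" using xB r by linarith
    have "3/2*(x-r) = 3/2*x - 3/2*r" by (simp add: right_diff_distrib)
    hence "x + 1 \<le> 3/2*(x-r)" using xB by linarith
    hence "(x+1)^2 \<le> (3/2*(x-r))^2" using xB r by (intro power_mono) auto
    moreover have "(3/2*(x-r))^2 = 9/4*(x-r)^2" by (simp add: power2_eq_square field_simps)
    ultimately have "(x+1)^2 \<le> 9/4*(x-r)^2" by simp
    hence "r*(x+1)^2 \<le> r*(9/4*(x-r)^2)" using r by (intro mult_left_mono) auto
    also have "\<dots> < 3*r*(x-r)^2" using r xr by simp
    also have "\<dots> \<le> R*(x-r)^2" using R by (simp add: mult_right_mono)
    finally have key: "r*(x+1)^2 < R*(x-r)^2" .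
    have p2: "(x-r)^2+0 > 0" "(x+1)^2+0 > 0" using xr xB r by simp_all
    have "HH d A r x 0 \<le> 4*r*x*d/((x-r)^2+0) - 4*x*A/((x+1)^2+0)"
      using xr xB d A R r by (intro HH_bound) auto
    also have "\<dots> = 4*x*d*(r*((x+1)^2+0) - R*((x-r)^2+0))/(((x-r)^2+0)*((x+1)^2+0))"
      using p2 unfolding A by (simp add: field_simps)
    also have "\<dots> < 0" using p2 key xB r d
      by (intro divide_neg_pos mult_pos_neg) auto
    finally show "HH d A r x 0 < 0" .
  qed
qed

lemma real_incr:
  assumes d: "d>0" and r: "r>1" and A: "A > 0" and uv: "1 < u" "u < v" "v < r"
  shows "HH d A r u 0 < HH d A r v 0"
proof -
  have der: "DERIV (\<lambda>x. HH d A r x 0) x :> d * 2 / (x + r) - d * 2 / (x - r) + A * (2 / (x - 1) - 2 / (x + 1))"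
    if "u \<le> x" "x \<le> v" for x using that uv r by (intro HH_deriv_x) auto
  obtain z where z: "u < z" "z < v" "HH d A r v 0 - HH d A r u 0 = (v - u) * (d * 2 / (z + r) - d * 2 / (z - r) + A * (2 / (z - 1) - 2 / (z + 1)))"
    using MVT2[OF uv(2), of "\<lambda>x. HH d A r x 0", OF der] by auto
  have "d * 2 / (z + r) > 0" using d z uv r by simp
  moreover have "d * 2 / (z - r) < 0" using d z uv by (simp add: divide_pos_neg)
  moreover have "2 / (z - 1) > 2 / (z + 1)" using z uv by (simp add: frac_less2)
  hence "A * (2 / (z - 1) - 2 / (z + 1)) > 0" using A by simp
  ultimately have "d * 2 / (z + r) - d * 2 / (z - r) + A * (2 / (z - 1) - 2 / (z + 1)) > 0" by linarith
  hence "(v - u) * (d * 2 / (z + r) - d * 2 / (z - r) + A * (2 / (z - 1) - 2 / (z + 1))) > 0"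
    using uv by (intro mult_pos_pos) auto
  thus ?thesis using z by linarith
qed

lemma HH_r_pos:
  assumes d: "d>0" and r: "r>1" and A: "A > 0"
  shows "\<exists>p>0. HH d A r r p > 0"
proof -
  define K where "K = 4*r*A/(r-1)^2"
  define p where "p = 4*r^2 * exp (-(K/d+1))"
  have p: "p > 0" using r unfolding p_def by simp
  have r2: "4*r^2 > 0" using r by simp
  have l1: "ln (4*r^2+p) \<ge> ln (4*r^2)" using p r2 by (subst ln_le_cancel_iff) (auto simp: add_pos_pos)
  have l2: "ln p = ln (4*r^2) - (K/d+1)" unfolding p_def using r2 by (simp add: ln_mult)
  have "d*(ln (4*r^2+p) - ln p) \<ge> d*(K/d+1)" using l1 l2 d by (intro mult_left_mono) auto
  moreover have "d*(K/d+1) = K + d" using d by (simp add: field_simps)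
  ultimately have t1: "d*(ln (4*r^2+p) - ln p) \<ge> K + d" by linarith
  define p3 where "p3 = (r-1)^2+p"
  define p4 where "p4 = (r+1)^2+p"
  have pos: "p3 > 0" "p4 > 0" using p unfolding p3_def p4_def by (simp_all add: add_nonneg_pos)
  have "ln p4 - ln p3 = ln (p4/p3)" using pos by (simp add: ln_div)
  also have "\<dots> \<le> p4/p3 - 1" using pos by (intro ln_le_minus_one) simp
  also have "\<dots> = 4*r/p3" using pos unfolding p3_def p4_def by (simp add: field_simps power2_eq_square)
  also have "\<dots> \<le> 4*r/(r-1)^2" using r p unfolding p3_def by (intro divide_left_mono) (auto intro!: mult_pos_pos add_pos_pos)
  finally have "A*(ln p4 - ln p3) \<le> A*(4*r/(r-1)^2)" using A by (intro mult_left_mono) auto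
  hence t2: "A*(ln p3 - ln p4) \<ge> -K" unfolding K_def by (simp add: algebra_simps)
  have e: "HH d A r r p = d*(ln (4*r^2+p) - ln p) + A*(ln p3 - ln p4)"
    unfolding HH_def p3_def p4_def by (simp add: algebra_simps power2_eq_square)
  show ?thesis using t1 t2 e d p by (intro exI[of _ p]) auto
qed




theorem lemma4p8:
  fixes d a b :: nat and r R x0 x1 x :: real
  assumes "d > 0" and "a > 0" and "b > 0"
    and r_def: "r = (real d + 2 * real b) / real d"
    and R_def: "R = (real a + real d) / real d"
    and "R \<ge> 3 * r"
    and x0: "1 < x0" "x0 < r" "Phi d a r (complex_of_real x0) = 0"
    and x1: "r < x1" "Phi d a r (complex_of_real x1) = 0"
    and x: "1 < x"
  shows "(x0 \<le> x \<and> x \<le> x1 \<longrightarrow>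
           (\<exists>yx. yx \<ge> 0 \<and> Complex x yx \<noteq> complex_of_real r \<and> Phi d a r (Complex x yx) = 0
              \<and> (\<forall>y. y \<ge> 0 \<and> Complex x y \<noteq> complex_of_real r \<and> Phi d a r (Complex x y) = 0 \<longrightarrow> y = yx)
              \<and> (\<forall>y. 0 < y \<and> y < yx \<longrightarrow> Phi d a r (Complex x y) > 0)
              \<and> (\<forall>y. y > yx \<longrightarrow> Phi d a r (Complex x y) < 0)))
       \<and> (\<not> (x0 \<le> x \<and> x \<le> x1) \<longrightarrow> (\<forall>y. y \<ge> 0 \<longrightarrow> Phi d a r (Complex x y) < 0))"
proof -
  define dd where "dd = real d"
  define A where "A = real a + real d"
  have dpos: "dd > 0" using assms(1) unfolding dd_def by simp
  have r1: "r > 1" unfolding r_def using assms(1,3) by (simp add: field_simps)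
  have RR: "R \<ge> 3*r" by fact
  have RA: "A = R * dd" unfolding A_def R_def dd_def using assms(1) by simp
  have Rr: "R > r" using RR r1 by linarith
  have Apos: "A > 0" unfolding A_def using assms(2) by simp
  have PH: "Phi d a r (Complex u y) = HH dd A r u (y^2) / 2" for u y
    unfolding Phi_HH dd_def A_def by (simp add: add.commute)
  have ofr: "complex_of_real u = Complex u 0" for u by (simp add: complex_eq_iff)
  define G where "G = (\<lambda>u. HH dd A r u 0)"
  have Gx0: "G x0 = 0" using x0(3) unfolding ofr PH G_def by simp
  have Gx1: "G x1 = 0" using x1(2) unfolding ofr PH G_def by simp
  interpret RU: unimod G "\<lambda>x. dd * 2 / (x + r) - dd * 2 / (x - r) + A * (2 / (x - 1) - 2 / (x + 1))" r "3*r+2"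
    unfolding G_def using real_unimod[OF dpos r1 RR RA] .
  have Gsign: "(x0 \<le> x \<and> x \<le> x1 \<longrightarrow> G x \<ge> 0) \<and> (\<not> (x0 \<le> x \<and> x \<le> x1) \<longrightarrow> G x < 0)" if "x \<noteq> r"
  proof (cases "x < r")
    case True
    have incr: "G u < G v" if "1 < u" "u < v" "v < r" for u v
      unfolding G_def using real_incr[OF dpos r1 Apos that] .
    show ?thesis
    proof (intro conjI impI)
      assume "x0 \<le> x \<and> x \<le> x1"
      thus "G x \<ge> 0" using incr[of x0 x] True Gx0 x0 by (cases "x0 = x") auto
    next
      assume "\<not> (x0 \<le> x \<and> x \<le> x1)"
      hence "x < x0" using True x1 by linarith
      thus "G x < 0" using incr[of x x0] Gx0 x x0 by auto
    qed
  next
    case False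
    hence xr: "x > r" using that by simp
    show ?thesis
    proof (intro conjI impI)
      assume "x0 \<le> x \<and> x \<le> x1"
      thus "G x \<ge> 0" using RU.Pos[OF xr, of x1] Gx1 by (cases "x = x1") auto
    next
      assume "\<not> (x0 \<le> x \<and> x \<le> x1)"
      hence "x > x1" using xr x0 by linarith
      thus "G x < 0" using RU.Neg2[of x1 x] Gx1 x1 by auto
    qed
  qed
  define a0 where "a0 = (if x = r then 0 else - (min ((x-1)^2) ((x-r)^2)) / 2)"
  have a0le: "a0 \<le> 0" unfolding a0_def by auto
  have a0neg: "x \<noteq> r \<Longrightarrow> a0 < 0" unfolding a0_def using x by (auto simp: min_def)
  define m where "m = min ((x-1)^2) ((x-r)^2)"
  have m: "m \<le> (x-1)^2" "m \<le> (x-r)^2" "m \<ge> 0" unfolding m_def by auto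
  have a01: "a0 \<ge> - ((x-1)^2)" unfolding a0_def m_def[symmetric] using m by auto
  have a02: "a0 \<ge> - ((x-r)^2)" unfolding a0_def m_def[symmetric] using m by auto
  define B where "B = r*(x+1)^2/(R-r) + 1"
  interpret CU: unimod "HH dd A r x" "\<lambda>s. dd/((x+r)^2+s) - dd/((x-r)^2+s) + A*(1/((x-1)^2+s) - 1/((x+1)^2+s))" a0 B
    unfolding B_def using cplx_unimod[OF dpos r1 Rr RA x a01 a02] .
  show ?thesis
  proof (intro conjI impI)
    assume xin: "x0 \<le> x \<and> x \<le> x1"
    obtain t where t: "t \<ge> 0" "a0 < t" "HH dd A r x t = 0" "x = r \<Longrightarrow> t > 0"
    proof (cases "x = r")
      case True
      obtain p where p: "p > 0" "HH dd A r r p > 0" using HH_r_pos[OF dpos r1 Apos] by auto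
      then obtain t where tp: "t > p" "HH dd A r x t = 0" using CU.Ex[of p] a0le True by auto
      show ?thesis
      proof (rule that[of t])
        show "0 \<le> t" "a0 < t" "x = r \<Longrightarrow> 0 < t" using tp p a0le by auto
      qed (use tp in auto)
    next
      case False
      have G0: "G x \<ge> 0" using Gsign[OF False] xin by auto
      show ?thesis
      proof (cases "G x = 0")
        case True
        thus ?thesis using that[of 0] False a0neg unfolding G_def by auto
      next
        case False2: False
        hence "HH dd A r x 0 > 0" using G0 unfolding G_def by auto
        then obtain t where tp: "t > 0" "HH dd A r x t = 0" using CU.Ex[of 0] a0neg False by auto
        show ?thesis
        proof (rule that[of t])
          show "0 \<le> t" "a0 < t" "x = r \<Longrightarrow> 0 < t" using tp a0le by auto
        qed (use tp in auto)
      qed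
    qed
    define yx where "yx = sqrt t"
    have yx2: "yx^2 = t" unfolding yx_def using t(1) by simp
    have yx0: "yx \<ge> 0" unfolding yx_def using t(1) by simp
    show "\<exists>yx. yx \<ge> 0 \<and> Complex x yx \<noteq> complex_of_real r \<and> Phi d a r (Complex x yx) = 0
              \<and> (\<forall>y. y \<ge> 0 \<and> Complex x y \<noteq> complex_of_real r \<and> Phi d a r (Complex x y) = 0 \<longrightarrow> y = yx)
              \<and> (\<forall>y. 0 < y \<and> y < yx \<longrightarrow> Phi d a r (Complex x y) > 0)
              \<and> (\<forall>y. y > yx \<longrightarrow> Phi d a r (Complex x y) < 0)"
    proof (intro exI[of _ yx] conjI allI impI)
      show "yx \<ge> 0" by fact
      show "Complex x yx \<noteq> complex_of_real r"
        using t(4) yx2 unfolding ofr by auto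
      show "Phi d a r (Complex x yx) = 0" unfolding PH yx2 using t by simp
    next
      fix y assume y: "0 \<le> y \<and> Complex x y \<noteq> complex_of_real r \<and> Phi d a r (Complex x y) = 0"
      have "a0 < y^2"
      proof (cases "x = r")
        case True
        hence "y \<noteq> 0" using y unfolding ofr by auto
        thus ?thesis using a0le by (simp add: order_le_less_trans)
      next
        case False thus ?thesis using a0neg by (smt (verit) zero_le_power2)
      qed
      hence "y^2 = t" using CU.Uniq[of "y^2" t] y t unfolding PH by auto
      thus "y = yx" using y yx0 yx2 by (metis power2_eq_iff_nonneg)
    next
      fix y assume y: "0 < y \<and> y < yx"
      hence "y^2 < yx^2" by (intro power_strict_mono) auto
      moreover have "a0 < y^2" using a0le y by (smt (verit) zero_less_power)
      ultimately have "HH dd A r x (y^2) > 0" using CU.Pos[of "y^2" t] yx2 t by auto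
      thus "Phi d a r (Complex x y) > 0" unfolding PH by simp
    next
      fix y assume y: "y > yx"
      hence "y^2 > yx^2" using yx0 by (intro power_strict_mono) auto
      hence "HH dd A r x (y^2) < 0" using CU.Neg2[of t "y^2"] yx2 t by auto
      thus "Phi d a r (Complex x y) < 0" unfolding PH by simp
    qed
  next
    assume xout: "\<not> (x0 \<le> x \<and> x \<le> x1)"
    hence xr: "x \<noteq> r" using x0 x1 by auto
    have G0: "G x < 0" using Gsign[OF xr] xout by auto
    show "\<forall>y\<ge>0. Phi d a r (Complex x y) < 0"
    proof (intro allI impI)
      fix y :: real assume y: "y \<ge> 0"
      show "Phi d a r (Complex x y) < 0"
      proof (cases "y = 0")
        case True thus ?thesis using G0 unfolding PH G_def by simp
      next
        case False
        hence "y^2 > 0" by simp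
        hence "HH dd A r x (y^2) < 0" using CU.Neg2[of 0 "y^2"] a0neg[OF xr] G0 unfolding G_def by auto
        thus ?thesis unfolding PH by simp
      qed
    qed
  qed
qed


end
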